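(* Let $\Delta,\sigma>0$ and $C>1$ be real numbers, $t$ a positive integer, and $M_1,\dots,M_t$ finite sets with $\Delta\le|M_j|\le C\Delta$ for $j\in[t]$, where $\sigma:=\sum_{i,j=1}^t|M_i\cap M_j|$ satisfies $\sigma\le10^{-4}t^2\Delta$. Then there are at least $\frac{t^2\Delta}{16(2C+1)\sigma}$ pairwise disjoint sets $\tilde M_l\subseteq M_{i_l}$ with $|\tilde M_l|\ge\frac{\Delta}{4(2C+1)}$. *)

theory Defs
  imports "HOL-Analysis.Analysis"
begin

end

theory Submission
  imports Defs
begin

lemma card_diff_UN_ge:
  assumes "finite A" "finite S"
  shows "real (card (A - (\<Union>m\<in>S. B m))) \<ge> real (card A) - (\<Sum>m\<in>S. real (card (A \<inter> B m)))"
proof -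
  have fin: "finite (A \<inter> (\<Union>m\<in>S. B m))" using assms by simp
  have e: "card (A - (\<Union>m\<in>S. B m)) = card A - card (A \<inter> (\<Union>m\<in>S. B m))"
    using card_Diff_subset_Int[OF fin] .
  have le: "card (A \<inter> (\<Union>m\<in>S. B m)) \<le> card A"
    using assms by (intro card_mono) auto
  have eq: "A \<inter> (\<Union>m\<in>S. B m) = (\<Union>m\<in>S. A \<inter> B m)" by blast
  have "card (A \<inter> (\<Union>m\<in>S. B m)) \<le> (\<Sum>m\<in>S. card (A \<inter> B m))"
    unfolding eq by (rule card_UN_le[OF assms(2)])
  hence "real (card (A \<inter> (\<Union>m\<in>S. B m))) \<le> (\<Sum>m\<in>S. real (card (A \<inter> B m)))"
    by (metis of_nat_le_iff of_nat_sum)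
  thus ?thesis using e le by (simp add: of_nat_diff)
qed

theorem lemma14:
  fixes \<Delta> \<sigma> C :: real and t :: nat and M :: "nat \<Rightarrow> 'a set"
  assumes "\<Delta> > 0" and "\<sigma> > 0" and "C > 1" and "t > 0"
    and "\<forall>j\<in>{1..t}. finite (M j)"
    and "\<forall>j\<in>{1..t}. \<Delta> \<le> real (card (M j)) \<and> real (card (M j)) \<le> C * \<Delta>"
    and "\<sigma> = (\<Sum>i\<in>{1..t}. \<Sum>j\<in>{1..t}. real (card (M i \<inter> M j)))"
    and "\<sigma> \<le> 10 powi (-4) * (real t)\<^sup>2 * \<Delta>"
  shows "\<exists>(k::nat) (Mt :: nat \<Rightarrow> 'a set) (idx :: nat \<Rightarrow> nat).
           real k \<ge> (real t)\<^sup>2 * \<Delta> / (16 * (2 * C + 1) * \<sigma>) \<and>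
           (\<forall>l<k. idx l \<in> {1..t} \<and> Mt l \<subseteq> M (idx l)
                  \<and> real (card (Mt l)) \<ge> \<Delta> / (4 * (2 * C + 1))) \<and>
           (\<forall>l<k. \<forall>l'<k. l \<noteq> l' \<longrightarrow> Mt l \<inter> Mt l' = {})"
proof -
  note D = assms(1) and S = assms(2) and Cg = assms(3) and tp = assms(4)
  define T where "T = real t"
  have Tp: "T > 0" using tp by (simp add: T_def)
  define w where "w i j = real (card (M i \<inter> M j))" for i j
  have wnn: "w i j \<ge> 0" for i j by (simp add: w_def)
  have wsym: "w i j = w j i" for i j by (simp add: w_def Int_commute)
  define d where "d i = (\<Sum>j\<in>{1..t}. w i j)" for i
  have dnn: "d i \<ge> 0" for i unfolding d_def by (intro sum_nonneg) (simp add: wnn)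
  have sig: "\<sigma> = (\<Sum>i\<in>{1..t}. d i)" using assms(7) by (simp add: d_def w_def)
  have tD: "T * \<Delta> \<le> \<sigma>"
  proof -
    have "d i \<ge> \<Delta>" if "i \<in> {1..t}" for i
    proof -
      have "w i i \<le> d i" unfolding d_def using that by (intro member_le_sum) (auto simp: wnn)
      moreover have "w i i \<ge> \<Delta>" using assms(6) that by (simp add: w_def)
      ultimately show ?thesis by simp
    qed
    hence "(\<Sum>i\<in>{1..t}. \<Delta>) \<le> (\<Sum>i\<in>{1..t}. d i)" by (intro sum_mono) auto
    thus ?thesis using sig by (simp add: T_def)
  qed
  define G where "G = {i\<in>{1..t}. d i \<le> 2*\<sigma>/T}"
  have Gsub: "G \<subseteq> {1..t}" by (auto simp: G_def)
  have finG: "finite G" using Gsub finite_subset by blast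
  have cG: "T/2 \<le> real (card G)"
  proof -
    let ?B = "{1..t} - G"
    have "(\<Sum>i\<in>?B. 2*\<sigma>/T) \<le> (\<Sum>i\<in>?B. d i)"
      by (intro sum_mono) (auto simp: G_def)
    also have "\<dots> \<le> (\<Sum>i\<in>{1..t}. d i)" by (intro sum_mono2) (auto simp: dnn)
    finally have "real (card ?B) * (2*\<sigma>/T) \<le> \<sigma>" using sig by simp
    moreover have "real (card ?B) = T - real (card G)"
      using card_Diff_subset[OF finG Gsub] card_mono[OF _ Gsub] by (simp add: T_def of_nat_diff)
    moreover from calculation(1) have "(real (card ?B) * 2) * \<sigma> \<le> T * \<sigma>"
      using Tp by (simp add: field_simps)
    hence "real (card ?B) * 2 \<le> T" using S mult_le_cancel_right_pos by blast
    ultimately show ?thesis by linarith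
  qed
  define valid where "valid k f \<longleftrightarrow> (\<forall>l<k. f l \<in> G) \<and> (\<forall>l<k. \<forall>m<l. f l \<noteq> f m)
      \<and> (\<forall>l<k. (\<Sum>m<l. w (f l) (f m)) \<le> \<Delta>/2)" for k and f :: "nat \<Rightarrow> nat"
  have injf: "inj_on f {..<k}" if "valid k f" for k f
  proof (rule inj_onI)
    fix x y assume "x \<in> {..<k}" "y \<in> {..<k}" "f x = f y"
    thus "x = y" using that unfolding valid_def
      by (metis lessThan_iff linorder_neqE_nat)
  qed
  have vbound: "k \<le> card G" if "valid k f" for k f
  proof -
    have "card (f ` {..<k}) = k" using card_image[OF injf[OF that]] by simp
    moreover have "card (f ` {..<k}) \<le> card G"
      using that finG by (intro card_mono) (auto simp: valid_def)
    ultimately show ?thesis by simp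
  qed
  have v0: "valid 0 (\<lambda>_. 0)" by (simp add: valid_def)
  have "\<exists>K. (\<exists>f. valid K f) \<and> (\<forall>y. (\<exists>f. valid y f) \<longrightarrow> y \<le> K)"
  proof -
    have p0: "\<exists>f. valid 0 f" using v0 by blast
    have pb: "\<forall>y. (\<exists>f. valid y f) \<longrightarrow> y \<le> card G" using vbound by blast
    show ?thesis using Nat.ex_has_greatest_nat[of "\<lambda>k. \<exists>f. valid k f", OF p0 pb] by simp
  qed
  then obtain K f where vK: "valid K f" and maxK: "\<And>y g. valid y g \<Longrightarrow> y \<le> K" by blast
  define F where "F = f ` {..<K}"
  have FG: "F \<subseteq> G" using vK by (auto simp: F_def valid_def)
  have cF: "card F = K" using card_image[OF injf[OF vK]] by (simp add: F_def)
  have big: "(\<Sum>m<K. w j (f m)) > \<Delta>/2" if j: "j \<in> G - F" for j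
  proof (rule ccontr)
    assume neg: "\<not> ?thesis"
    define g where "g = f(K := j)"
    have gf: "g m = f m" if "m < K" for m using that by (simp add: g_def)
    have "valid (Suc K) g" unfolding valid_def
    proof (intro conjI allI impI)
      fix l assume "l < Suc K"
      thus "g l \<in> G" using vK j by (cases "l = K") (auto simp: valid_def g_def)
    next
      fix l m assume l: "l < Suc K" and m: "m < l"
      show "g l \<noteq> g m"
      proof (cases "l = K")
        case True thus ?thesis using m j by (auto simp: g_def F_def)
      next
        case False thus ?thesis using l m vK by (auto simp: g_def valid_def)
      qed
    next
      fix l assume l: "l < Suc K"
      show "(\<Sum>m<l. w (g l) (g m)) \<le> \<Delta>/2"
      proof (cases "l = K")
        case True
        have "(\<Sum>m<l. w (g l) (g m)) = (\<Sum>m<K. w j (f m))"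
          using True by (intro sum.cong) (auto simp: g_def)
        thus ?thesis using neg by simp
      next
        case False
        hence lK: "l < K" using l by simp
        have "(\<Sum>m<l. w (g l) (g m)) = (\<Sum>m<l. w (f l) (f m))"
          using lK by (intro sum.cong) (auto simp: g_def)
        thus ?thesis using vK lK by (simp add: valid_def)
      qed
    qed
    thus False using maxK by fastforce
  qed
  have finGF: "finite (G - F)" using finG by simp
  have "real (card (G - F)) * (\<Delta>/2) \<le> (\<Sum>j\<in>G - F. \<Sum>m<K. w j (f m))"
    using sum_mono[of "G - F" "\<lambda>_. \<Delta>/2" "\<lambda>j. \<Sum>m<K. w j (f m)"] big by fastforce
  also have "\<dots> = (\<Sum>m<K. \<Sum>j\<in>G - F. w j (f m))" by (rule sum.swap)
  also have "\<dots> \<le> (\<Sum>m<K. d (f m))"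
  proof (intro sum_mono)
    fix m assume "m \<in> {..<K}"
    have "(\<Sum>j\<in>G - F. w j (f m)) = (\<Sum>j\<in>G - F. w (f m) j)" by (simp add: wsym)
    also have "\<dots> \<le> (\<Sum>j\<in>{1..t}. w (f m) j)" using Gsub by (intro sum_mono2) (auto simp: wnn)
    finally show "(\<Sum>j\<in>G - F. w j (f m)) \<le> d (f m)" by (simp add: d_def)
  qed
  also have "\<dots> \<le> (\<Sum>m<K. 2*\<sigma>/T)"
    using vK by (intro sum_mono) (auto simp: valid_def G_def)
  finally have ineq: "real (card (G - F)) * (\<Delta>/2) \<le> real K * (2*\<sigma>/T)" by simp
  have cGF: "real (card (G - F)) = real (card G) - real K"
    using card_Diff_subset[OF finite_subset[OF FG finG] FG] card_mono[OF finG FG] cF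
    by (simp add: of_nat_diff)
  have ineq2: "(real (card G) - real K) * \<Delta> * T \<le> 4 * real K * \<sigma>"
    using ineq cGF Tp by (simp add: field_simps)
  have "T * (T/2) * \<Delta> \<le> T * real (card G) * \<Delta>"
    using cG Tp D by (intro mult_right_mono mult_left_mono) auto
  have KT: "real K * (T * \<Delta>) \<le> real K * \<sigma>" using tD by (intro mult_left_mono) auto
  have key: "T^2 * \<Delta> \<le> 10 * real K * \<sigma>"
  proof -
    have a: "T * (T/2) * \<Delta> \<le> T * real (card G) * \<Delta>"
      using cG Tp D by (intro mult_right_mono mult_left_mono) auto
    from a ineq2 KT show ?thesis by (simp add: power2_eq_square algebra_simps)
  qed
  have Kbound: "(real t)\<^sup>2 * \<Delta> / (16 * (2 * C + 1) * \<sigma>) \<le> real K"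
  proof -
    have pos: "16 * (2 * C + 1) * \<sigma> > 0" using Cg S by simp
    have h10: "10 * (\<sigma> * real K) \<le> (16 * (2 * C + 1)) * (\<sigma> * real K)"
      using Cg S by (intro mult_right_mono) auto
    hence "10 * real K * \<sigma> \<le> 16 * (2 * C + 1) * \<sigma> * real K" by (simp add: mult_ac)
    hence "T^2 * \<Delta> \<le> real K * (16 * (2 * C + 1) * \<sigma>)" using key by (simp add: mult.commute)
    thus ?thesis using pos by (simp add: pos_divide_le_eq T_def)
  qed
  define Mt where "Mt l = M (f l) - (\<Union>m\<in>{..<l}. M (f m))" for l
  show ?thesis
  proof (intro exI conjI allI impI)
    show "(real t)\<^sup>2 * \<Delta> / (16 * (2 * C + 1) * \<sigma>) \<le> real K" by (rule Kbound)
  next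
    fix l assume l: "l < K"
    have fl: "f l \<in> {1..t}" using vK l Gsub by (auto simp: valid_def)
    thus "f l \<in> {1..t}" .
    show "Mt l \<subseteq> M (f l)" by (auto simp: Mt_def)
    have finA: "finite (M (f l))" using assms(5) fl by blast
    have "real (card (Mt l)) \<ge> real (card (M (f l))) - (\<Sum>m<l. w (f l) (f m))"
      unfolding Mt_def w_def using card_diff_UN_ge[OF finA, of "{..<l}" "\<lambda>m. M (f m)"] by simp
    moreover have "(\<Sum>m<l. w (f l) (f m)) \<le> \<Delta>/2" using vK l by (simp add: valid_def)
    moreover have "real (card (M (f l))) \<ge> \<Delta>" using assms(6) fl by blast
    moreover have "\<Delta> / (4 * (2 * C + 1)) \<le> \<Delta>/2"
      using D Cg by (intro divide_left_mono) auto
    ultimately show "\<Delta> / (4 * (2 * C + 1)) \<le> real (card (Mt l))" by linarith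
  next
    fix l l' assume "l < K" "l' < K" "l \<noteq> l'"
    show "Mt l \<inter> Mt l' = {}"
    proof (cases "l < l'")
      case True thus ?thesis by (auto simp: Mt_def)
    next
      case False hence "l' < l" using \<open>l \<noteq> l'\<close> by simp
      thus ?thesis by (auto simp: Mt_def)
    qed
  qed
qed

end
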